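(* Consider the following slotted system without diversity. There are $N\ge 2$ users and time slots $t=1,\dots,T$. In each slot a base station (BS) schedules exactly one user, using the uniform randomized algorithm: in every slot, independently of everything else, each user is scheduled with probability $\frac1N$. An adversary chooses a blocking matrix $\sigma=(\sigma_i(t))\in\{0,1\}^{N\times T}$, where $\sigma_i(t)=0$ means that the channel to user $i$ is blocked in slot $t$. The matrix $\sigma$ is feasible if $\sum_{i=1}^N\sum_{t=1}^T(1-\sigma_i(t))\le \alpha T$ and $\sum_{i=1}^N(1-\sigma_i(t))\le 1$ for every $t$, where $0<\alpha<1$ and $\alpha T$ is an integer. The ages satisfy $a_i(1)=1$; if user $i$ is scheduled in slot $t$ and $\sigma_i(t)=1$ then $a_i(t+1)=1$, and otherwise $a_i(t+1)=a_i(t)+1$. The average age is $\Delta^{\sigma}=\frac1T\sum_{t=1}^T\frac1N\sum_{i=1}^N\mathbb{E}[a_i(t)]$. Then there exists a feasible blocking matrix maximizing $\Delta^{\sigma}$ over all feasible $\sigma$ whose blocked slots all belong to a single user and form a set of consecutive time slots. Moreover, the blocked user may be chosen arbitrarily.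
   Context: The expectation is over the random scheduling choices of the BS. The adversary's matrix $\sigma$ is fixed (deterministic). *)

theory Defs
  imports "HOL-Probability.Probability"
begin

text \<open>Users are indexed by 0..N-1, slots by 1..T.  A schedule s assigns to each slot t in {1..T} the
  scheduled user s t < N.\<close>

definition schedules :: "nat \<Rightarrow> nat \<Rightarrow> (nat \<Rightarrow> nat) set" where
  "schedules N T = PiE {1..T} (\<lambda>_. {..<N})"

text \<open>Uniform randomized algorithm: independently in each slot, each user with
  probability 1/N; equivalently, the schedule is uniform on all schedules.\<close>
definition uniform_sched :: "nat \<Rightarrow> nat \<Rightarrow> (nat \<Rightarrow> nat) pmf" where
  "uniform_sched N T = pmf_of_set (schedules N T)"

text \<open>Age a_i(t): a_i(1) = 1; a_i(t+1) = 1 if i scheduled in t and sigma_i(t) = 1,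
  else a_i(t)+1.  (The value at t = 0 is irrelevant.)\<close>
fun age :: "(nat \<Rightarrow> nat \<Rightarrow> nat) \<Rightarrow> (nat \<Rightarrow> nat) \<Rightarrow> nat \<Rightarrow> nat \<Rightarrow> nat" where
  "age \<sigma> s i 0 = 1"
| "age \<sigma> s i (Suc t) =
     (if t = 0 then 1 else if s t = i \<and> \<sigma> i t = 1 then 1 else age \<sigma> s i t + 1)"

definition avg_age :: "nat \<Rightarrow> nat \<Rightarrow> (nat \<Rightarrow> nat \<Rightarrow> nat) \<Rightarrow> real" where
  "avg_age N T \<sigma> = (1 / real T) * (\<Sum>t=1..T. (1 / real N) *
      (\<Sum>i<N. measure_pmf.expectation (uniform_sched N T) (\<lambda>s. real (age \<sigma> s i t))))"

definition feasible :: "nat \<Rightarrow> nat \<Rightarrow> real \<Rightarrow> (nat \<Rightarrow> nat \<Rightarrow> nat) \<Rightarrow> bool" where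
  "feasible N T \<alpha> \<sigma> \<longleftrightarrow>
     (\<forall>i<N. \<forall>t\<in>{1..T}. \<sigma> i t \<in> {0, 1}) \<and>
     real (\<Sum>i<N. \<Sum>t=1..T. (1 - \<sigma> i t)) \<le> \<alpha> * real T \<and>
     (\<forall>t\<in>{1..T}. (\<Sum>i<N. (1 - \<sigma> i t)) \<le> 1)"

end

theory Submission
  imports Defs
begin

fun preL :: "real list \<Rightarrow> real" where
  "preL [] = 1" | "preL (x#xs) = 1 + x * preL xs"
fun sufL :: "real list \<Rightarrow> real" where
  "sufL [] = 1" | "sufL (x#xs) = sufL xs + x * prod_list xs"
fun SL :: "real list \<Rightarrow> real" where
  "SL [] = 1" | "SL (x#xs) = SL xs + preL (x#xs)"

lemma preL_append: "preL (u@v) = preL u + prod_list u * (preL v - 1)"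
proof (induction u)
  case (Cons a u)
  have "preL ((a#u)@v) = 1 + a * preL (u@v)" by simp
  also have "\<dots> = 1 + a * (preL u + prod_list u * (preL v - 1))" using Cons by simp
  also have "\<dots> = preL (a#u) + prod_list (a#u) * (preL v - 1)" by (simp add: algebra_simps)
  finally show ?case .
qed simp
lemma sufL_append: "sufL (u@v) = sufL v + prod_list v * (sufL u - 1)"
  by (induction u) (auto simp: algebra_simps)
lemma SL_append: "SL (u@v) = SL u + SL v - 1 + (sufL u - 1) * (preL v - 1)"
  by (induction u) (auto simp: algebra_simps preL_append)

lemma preL_rep: "preL (replicate x 1) = real x + 1"
  by (induction x) auto
lemma sufL_rep: "sufL (replicate x 1) = real x + 1"
  by (induction x) auto
lemma SL_rep: "SL (replicate x 1) = (real x + 1) * (real x + 2) / 2"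
  by (induction x) (auto simp: preL_rep field_simps)

lemma sufL_snoc: "sufL (xs @ [c]) = 1 + c * sufL xs"
  by (simp add: sufL_append algebra_simps)
lemma SL_snoc: "SL (xs @ [c]) = SL xs + sufL (xs @ [c])"
  by (simp add: SL_append sufL_append algebra_simps)

lemma conv_identity:
  fixes A M B :: "real list" and x y :: nat
  shows "(real x + real y) * SL (A @ replicate x 1 @ M @ replicate y 1 @ B)
     + real x * real y * (real x + real y) * (1 - prod_list M)
     = real y * SL (A @ M @ replicate (x+y) 1 @ B) + real x * SL (A @ replicate (x+y) 1 @ M @ B)"
  apply (simp only: SL_append sufL_append preL_append prod_list.append SL_rep sufL_rep preL_rep prod_list_replicate)
  apply (simp add: field_simps)
  done

lemma conv_max:
  fixes A M B :: "real list" and x y :: nat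
  assumes "prod_list M \<le> 1"
  shows "SL (A @ replicate x 1 @ M @ replicate y 1 @ B)
     \<le> max (SL (A @ M @ replicate (x+y) 1 @ B)) (SL (A @ replicate (x+y) 1 @ M @ B))"
proof (cases "x + y = 0")
  case True then show ?thesis by simp
next
  case False
  let ?L = "SL (A @ replicate x 1 @ M @ replicate y 1 @ B)"
  let ?P = "SL (A @ M @ replicate (x+y) 1 @ B)"
  let ?Q = "SL (A @ replicate (x+y) 1 @ M @ B)"
  have id: "(real x + real y) * ?L + real x * real y * (real x + real y) * (1 - prod_list M)
     = real y * ?P + real x * ?Q" by (rule conv_identity)
  have "0 \<le> real x * real y * (real x + real y) * (1 - prod_list M)"
    using assms by simp
  hence "(real x + real y) * ?L \<le> real y * ?P + real x * ?Q" using id by linarith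
  also have "\<dots> \<le> real y * max ?P ?Q + real x * max ?P ?Q"
    by (intro add_mono mult_left_mono) auto
  also have "\<dots> = (real x + real y) * max ?P ?Q" by (simp add: algebra_simps)
  finally have "(real x + real y) * ?L \<le> (real x + real y) * max ?P ?Q" .
  moreover have "0 < real x + real y" using False by (metis of_nat_0_less_iff of_nat_add neq0_conv)
  ultimately show ?thesis by simp
qed

definition wt :: "real \<Rightarrow> bool \<Rightarrow> real" where
  "wt q b = (if b then 1 else q)"

definition intv :: "nat \<Rightarrow> nat \<Rightarrow> nat \<Rightarrow> bool list" where
  "intv L p k = replicate p False @ replicate k True @ replicate (L - p - k) False"

lemma count0_rep: "count_list r True = 0 \<Longrightarrow> r = replicate (length r) False"
  by (induction r) (auto split: if_splits)

lemma map_wt_rep: "map (wt q) (replicate n b) = replicate n (wt q b)"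
  by simp

lemma interval_opt_aux:
  assumes q: "0 \<le> q" "q \<le> 1"
  shows "\<forall>p x r. count_list r True = n \<longrightarrow> (\<exists>p'. p' + (x + n) \<le> p + x + length r \<and>
     SL (map (wt q) (replicate p False @ replicate x True @ r))
       \<le> SL (map (wt q) (intv (p + x + length r) p' (x + n))))"
proof (induction n rule: less_induct)
  case (less n)
  show ?case
  proof (intro allI impI)
    fix p x and r :: "bool list"
    assume cnt: "count_list r True = n"
    show "\<exists>p'. p' + (x + n) \<le> p + x + length r \<and>
     SL (map (wt q) (replicate p False @ replicate x True @ r))
       \<le> SL (map (wt q) (intv (p + x + length r) p' (x + n)))"
    proof (cases "True \<in> set r")
      case False
      then have n0: "n = 0" using cnt by (simp add: count_list_0_iff)
      hence "r = replicate (length r) False" using cnt count0_rep by blast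
      then have "intv (p + x + length r) p (x + n) = replicate p False @ replicate x True @ r"
        unfolding intv_def using n0 by (metis add_diff_cancel_left' add_0_right diff_diff_left)
      then show ?thesis using n0 by (intro exI[of _ p]) simp
    next
      case True
      then obtain r1 r2 where r: "r = r1 @ True # r2" and nr1: "True \<notin> set r1"
        by (meson split_list_first)
      have c1: "count_list r1 True = 0" using nr1 by (simp add: count_list_0_iff)
      hence r1: "r1 = replicate (length r1) False" using count0_rep by blast
      define m where "m = length r1"
      have r1m: "r1 = replicate m False" using r1 m_def by simp
      have cn: "count_list r2 True < n" and cn2: "n = count_list r2 True + 1"
        using cnt c1 r by auto
      have lenr: "length r = m + 1 + length r2" using r m_def by simp
      have qm: "prod_list (replicate m q) \<le> 1"
        using q by (simp add: power_le_one)
      have eq0: "map (wt q) (replicate p False @ replicate x True @ r)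
        = replicate p q @ replicate x 1 @ replicate m q @ replicate 1 1 @ map (wt q) r2"
        using r r1m by (simp add: wt_def)
      have eq1: "replicate p q @ replicate m q @ replicate (x+1) 1 @ map (wt q) r2
        = map (wt q) (replicate (p+m) False @ replicate (x+1) True @ r2)"
        by (simp add: wt_def replicate_add)
      have eq2: "replicate p q @ replicate (x+1) 1 @ replicate m q @ map (wt q) r2
        = map (wt q) (replicate p False @ replicate (x+1) True @ (replicate m False @ r2))"
        by (simp add: wt_def)
      have main: "SL (map (wt q) (replicate p False @ replicate x True @ r)) \<le>
          max (SL (map (wt q) (replicate (p+m) False @ replicate (x+1) True @ r2)))
              (SL (map (wt q) (replicate p False @ replicate (x+1) True @ (replicate m False @ r2))))"
        unfolding eq0 eq1[symmetric] eq2[symmetric] by (rule conv_max[OF qm])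
      obtain p1 where p1: "p1 + (x + 1 + count_list r2 True) \<le> (p+m) + (x+1) + length r2"
        "SL (map (wt q) (replicate (p+m) False @ replicate (x+1) True @ r2))
          \<le> SL (map (wt q) (intv ((p+m) + (x+1) + length r2) p1 (x + 1 + count_list r2 True)))"
        using less.IH[OF cn] by blast
      have c3: "count_list (replicate m False @ r2) True = count_list r2 True" by simp
      obtain p2 where p2: "p2 + (x + 1 + count_list r2 True) \<le> p + (x+1) + length (replicate m False @ r2)"
        "SL (map (wt q) (replicate p False @ replicate (x+1) True @ (replicate m False @ r2)))
          \<le> SL (map (wt q) (intv (p + (x+1) + length (replicate m False @ r2)) p2 (x + 1 + count_list r2 True)))"
        using less.IH[OF cn] c3 by metis
      have L1: "(p+m) + (x+1) + length r2 = p + x + length r" using lenr by simp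
      have L2: "p + (x+1) + length (replicate m False @ r2) = p + x + length r" using lenr by simp
      have k: "x + 1 + count_list r2 True = x + n" using cn2 by simp
      show ?thesis
      proof (cases "SL (map (wt q) (replicate (p+m) False @ replicate (x+1) True @ r2))
            \<le> SL (map (wt q) (replicate p False @ replicate (x+1) True @ (replicate m False @ r2)))")
        case True
        have m1: "SL (map (wt q) (replicate p False @ replicate x True @ r)) \<le>
            SL (map (wt q) (replicate p False @ replicate (x+1) True @ (replicate m False @ r2)))"
          using main True by (metis max.absorb2)
        have b1: "p2 + (x + n) \<le> p + x + length r" using p2(1) unfolding L2 k .
        have b2: "SL (map (wt q) (replicate p False @ replicate (x+1) True @ (replicate m False @ r2)))
            \<le> SL (map (wt q) (intv (p + x + length r) p2 (x + n)))" using p2(2) unfolding L2 k .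
        show ?thesis using m1 b1 b2 by (intro exI[of _ p2]) auto
      next
        case False
        have m1: "SL (map (wt q) (replicate p False @ replicate x True @ r)) \<le>
            SL (map (wt q) (replicate (p+m) False @ replicate (x+1) True @ r2))"
          using main False by (metis max.absorb1 nle_le)
        have b1: "p1 + (x + n) \<le> p + x + length r" using p1(1) unfolding L1 k .
        have b2: "SL (map (wt q) (replicate (p+m) False @ replicate (x+1) True @ r2))
            \<le> SL (map (wt q) (intv (p + x + length r) p1 (x + n)))" using p1(2) unfolding L1 k .
        show ?thesis using m1 b1 b2 by (intro exI[of _ p1]) auto
      qed
    qed
  qed
qed

lemma interval_opt:
  assumes "0 \<le> q" "q \<le> 1"
  shows "\<exists>p. p + count_list bs True \<le> length bs \<and>
     SL (map (wt q) bs) \<le> SL (map (wt q) (intv (length bs) p (count_list bs True)))"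
  using interval_opt_aux[OF assms, of "count_list bs True"] by (metis add_0 replicate_0 append_Nil)

lemma preL_ge1: "(\<forall>x\<in>set xs. 0 \<le> x) \<Longrightarrow> 1 \<le> preL xs"
  by (induction xs) auto

lemma wt_nonneg: "0 \<le> q \<Longrightarrow> 0 \<le> wt q b"
  by (simp add: wt_def)

lemma preL_mono:
  assumes q: "0 \<le> q" "q \<le> 1"
  shows "(\<forall>t\<in>set ts. P t \<longrightarrow> Q t) \<Longrightarrow>
    preL (map (wt q) (map P ts)) \<le> preL (map (wt q) (map Q ts))"
proof (induction ts)
  case (Cons t ts)
  have ih: "preL (map (wt q) (map P ts)) \<le> preL (map (wt q) (map Q ts))" using Cons by simp
  have w: "wt q (P t) \<le> wt q (Q t)" using Cons.prems q by (auto simp: wt_def)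
  have n: "0 \<le> preL (map (wt q) (map P ts))"
    using preL_ge1[of "map (wt q) (map P ts)"] wt_nonneg[OF q(1)] by force
  have "wt q (P t) * preL (map (wt q) (map P ts)) \<le> wt q (Q t) * preL (map (wt q) (map Q ts))"
    using mult_mono[OF w ih wt_nonneg[OF q(1)] n] .
  then show ?case by simp
qed simp

lemma SL_mono:
  assumes q: "0 \<le> q" "q \<le> 1"
  shows "(\<forall>t\<in>set ts. P t \<longrightarrow> Q t) \<Longrightarrow>
    SL (map (wt q) (map P ts)) \<le> SL (map (wt q) (map Q ts))"
proof (induction ts)
  case (Cons t ts)
  have ih: "SL (map (wt q) (map P ts)) \<le> SL (map (wt q) (map Q ts))" using Cons by simp
  have "preL (map (wt q) (map P (t#ts))) \<le> preL (map (wt q) (map Q (t#ts)))"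
    using preL_mono[OF q, of "t#ts" P Q] Cons.prems by blast
  then show ?case using ih by simp
qed simp

lemma preL_super:
  assumes q: "0 \<le> q" "q \<le> 1"
  shows "(\<forall>t\<in>set ts. \<not> (P t \<and> Q t)) \<Longrightarrow>
    preL (map (wt q) (map P ts)) + preL (map (wt q) (map Q ts)) \<le>
    preL (map (wt q) (map (\<lambda>t. P t \<or> Q t) ts)) + preL (map (wt q) (map (\<lambda>_. False) ts))"
proof (induction ts)
  case (Cons t ts)
  define A where "A = preL (map (wt q) (map P ts))"
  define B where "B = preL (map (wt q) (map Q ts))"
  define C where "C = preL (map (wt q) (map (\<lambda>t. P t \<or> Q t) ts))"
  define Z where "Z = preL (map (wt q) (map (\<lambda>_. False) ts))"
  have ih: "A + B \<le> C + Z" using Cons unfolding A_def B_def C_def Z_def by simp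
  have ZA: "Z \<le> A" unfolding A_def Z_def by (rule preL_mono[OF q]) simp
  have ZB: "Z \<le> B" unfolding B_def Z_def by (rule preL_mono[OF q]) simp
  have pq: "\<not> (P t \<and> Q t)" using Cons.prems by simp
  have e1: "q * (B - Z) \<le> B - Z" using mult_right_mono[OF q(2), of "B - Z"] ZB by simp
  have e2: "q * (A - Z) \<le> A - Z" using mult_right_mono[OF q(2), of "A - Z"] ZA by simp
  have e3: "q * (A + B) \<le> q * (C + Z)" using mult_left_mono[OF ih q(1)] .
  have fA: "preL (map (wt q) (map P (t#ts))) = 1 + wt q (P t) * A" by (simp add: A_def)
  have fB: "preL (map (wt q) (map Q (t#ts))) = 1 + wt q (Q t) * B" by (simp add: B_def)
  have fC: "preL (map (wt q) (map (\<lambda>t. P t \<or> Q t) (t#ts))) = 1 + wt q (P t \<or> Q t) * C"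
    by (simp add: C_def)
  have fZ: "preL (map (wt q) (map (\<lambda>_. False) (t#ts))) = 1 + wt q False * Z" by (simp add: Z_def)
  show ?case unfolding fA fB fC fZ
    using pq e1 e2 e3 ih by (cases "P t"; cases "Q t") (auto simp: wt_def algebra_simps)
qed simp

lemma SL_super:
  assumes q: "0 \<le> q" "q \<le> 1"
  shows "(\<forall>t\<in>set ts. \<not> (P t \<and> Q t)) \<Longrightarrow>
    SL (map (wt q) (map P ts)) + SL (map (wt q) (map Q ts)) \<le>
    SL (map (wt q) (map (\<lambda>t. P t \<or> Q t) ts)) + SL (map (wt q) (map (\<lambda>_. False) ts))"
proof (induction ts)
  case (Cons t ts)
  have ih: "SL (map (wt q) (map P ts)) + SL (map (wt q) (map Q ts)) \<le>
    SL (map (wt q) (map (\<lambda>t. P t \<or> Q t) ts)) + SL (map (wt q) (map (\<lambda>_. False) ts))"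
    using Cons by simp
  have p: "preL (map (wt q) (map P (t#ts))) + preL (map (wt q) (map Q (t#ts))) \<le>
    preL (map (wt q) (map (\<lambda>t. P t \<or> Q t) (t#ts))) + preL (map (wt q) (map (\<lambda>_. False) (t#ts)))"
    using preL_super[OF q, of "t#ts" P Q] Cons.prems by blast
  have "SL (map (wt q) (map P (t#ts))) + SL (map (wt q) (map Q (t#ts))) =
     (SL (map (wt q) (map P ts)) + SL (map (wt q) (map Q ts))) +
     (preL (map (wt q) (map P (t#ts))) + preL (map (wt q) (map Q (t#ts))))"
    by (simp only: list.map SL.simps; linarith)
  also have "\<dots> \<le> (SL (map (wt q) (map (\<lambda>t. P t \<or> Q t) ts)) + SL (map (wt q) (map (\<lambda>_. False) ts)))
     + (preL (map (wt q) (map (\<lambda>t. P t \<or> Q t) (t#ts))) + preL (map (wt q) (map (\<lambda>_. False) (t#ts))))"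
    using ih p by linarith
  also have "\<dots> = SL (map (wt q) (map (\<lambda>t. P t \<or> Q t) (t#ts))) + SL (map (wt q) (map (\<lambda>_. False) (t#ts)))"
    by (simp only: list.map SL.simps; linarith)
  finally show ?case .
qed simp

lemma SL_multi:
  assumes q: "0 \<le> q" "q \<le> 1"
    and disj: "\<forall>t\<in>set ts. \<forall>i j. i < n \<and> j < n \<and> \<beta> i t \<and> \<beta> j t \<longrightarrow> i = j"
  shows "(\<Sum>i<n. SL (map (wt q) (map (\<beta> i) ts))) \<le>
    SL (map (wt q) (map (\<lambda>t. \<exists>i<n. \<beta> i t) ts)) + (real n - 1) * SL (map (wt q) (map (\<lambda>_. False) ts))"
  using disj
proof (induction n)
  case 0
  then show ?case by simp
next
  case (Suc n)
  have ih: "(\<Sum>i<n. SL (map (wt q) (map (\<beta> i) ts))) \<le>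
    SL (map (wt q) (map (\<lambda>t. \<exists>i<n. \<beta> i t) ts)) + (real n - 1) * SL (map (wt q) (map (\<lambda>_. False) ts))"
    using Suc.IH Suc.prems by (meson less_SucI)
  have d: "\<forall>t\<in>set ts. \<not> ((\<exists>i<n. \<beta> i t) \<and> \<beta> n t)"
    using Suc.prems by (metis less_Suc_eq nat_neq_iff)
  note sp = SL_super[OF q, of ts "\<lambda>t. \<exists>i<n. \<beta> i t" "\<beta> n", OF d]
  have eqm: "map (\<lambda>t. (\<exists>i<n. \<beta> i t) \<or> \<beta> n t) ts = map (\<lambda>t. \<exists>i<Suc n. \<beta> i t) ts"
    by (auto simp: less_Suc_eq)
  show ?case using ih sp eqm by (simp add: algebra_simps)
qed


lemma age_local: "(\<forall>k<t. s k = s' k) \<Longrightarrow> age \<sigma> s i t = age \<sigma> s' i t"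
proof (induction t)
  case (Suc t) then show ?case by auto
qed simp

definition sw :: "nat \<Rightarrow> nat \<Rightarrow> nat \<Rightarrow> nat" where
  "sw i j v = (if v = i then j else if v = j then i else v)"

lemma sched_fin: "finite (schedules N T)"
  unfolding schedules_def by (simp add: finite_PiE)

lemma sched_ne: "N \<ge> 1 \<Longrightarrow> schedules N T \<noteq> {}"
  unfolding schedules_def by (auto simp: PiE_eq_empty_iff lessThan_empty_iff)

lemma swap_sum:
  fixes G :: "(nat \<Rightarrow> nat) \<Rightarrow> real"
  assumes i: "i < N" and j: "j < N" and t0: "t0 \<in> {1..T}"
    and G: "\<And>s x. G (s(t0 := x)) = G s"
  shows "(\<Sum>s\<in>schedules N T. if s t0 = i then G s else 0) =
         (\<Sum>s\<in>schedules N T. if s t0 = j then G s else 0)"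
proof -
  let ?h = "\<lambda>s. s(t0 := sw i j (s t0))"
  have inX: "?h s \<in> schedules N T" if "s \<in> schedules N T" for s
  proof -
    have "s t0 < N" using that t0 unfolding schedules_def by (auto simp: PiE_iff)
    hence "sw i j (s t0) < N" using i j by (auto simp: sw_def)
    then show ?thesis using that t0 unfolding schedules_def by (auto simp: PiE_iff extensional_def)
  qed
  have inv: "?h (?h s) = s" for s
    by (auto simp: sw_def)
  show ?thesis
  proof (rule sum.reindex_bij_witness[where i = ?h and j = ?h])
    fix s assume "s \<in> schedules N T"
    show "?h (?h s) = s" by (rule inv)
    show "?h s \<in> schedules N T" by (rule inX) fact
    show "(if ?h s t0 = j then G (?h s) else 0) = (if s t0 = i then G s else 0)"
      using G by (auto simp: sw_def)
  next
    fix s assume "s \<in> schedules N T"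
    show "?h (?h s) = s" by (rule inv)
    show "?h s \<in> schedules N T" by (rule inX) fact
  qed
qed

lemma split_sum:
  fixes G :: "(nat \<Rightarrow> nat) \<Rightarrow> real"
  assumes i: "i < N" and t0: "t0 \<in> {1..T}"
    and G: "\<And>s x. G (s(t0 := x)) = G s"
  shows "real N * (\<Sum>s\<in>schedules N T. if s t0 = i then G s else 0) =
         (\<Sum>s\<in>schedules N T. G s)"
proof -
  have "(\<Sum>s\<in>schedules N T. G s) = (\<Sum>s\<in>schedules N T. \<Sum>j<N. if s t0 = j then G s else 0)"
  proof (rule sum.cong)
    fix s assume "s \<in> schedules N T"
    hence "s t0 < N" using t0 unfolding schedules_def by (auto simp: PiE_iff)
    then show "G s = (\<Sum>j<N. if s t0 = j then G s else 0)"
      by (simp add: sum.delta)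
  qed simp
  also have "\<dots> = (\<Sum>j<N. \<Sum>s\<in>schedules N T. if s t0 = j then G s else 0)"
    by (rule sum.swap)
  also have "\<dots> = (\<Sum>j<N. \<Sum>s\<in>schedules N T. if s t0 = i then G s else 0)"
  proof (rule sum.cong[OF refl])
    fix j assume "j \<in> {..<N}"
    then show "(\<Sum>s\<in>schedules N T. if s t0 = j then G s else 0) =
        (\<Sum>s\<in>schedules N T. if s t0 = i then G s else 0)"
      by (intro swap_sum) (use i t0 G in auto)
  qed
  also have "\<dots> = real N * (\<Sum>s\<in>schedules N T. if s t0 = i then G s else 0)" by simp
  finally show ?thesis by simp
qed

definition qq :: "nat \<Rightarrow> real" where "qq N = 1 - 1 / real N"

lemma sum_age_rec:
  assumes N: "N \<ge> 1" and i: "i < N" and t: "1 \<le> t" "t < T"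
  shows "(\<Sum>s\<in>schedules N T. real (age \<sigma> s i (Suc t))) =
     real (card (schedules N T)) + (if \<sigma> i t = 1 then qq N else 1) * (\<Sum>s\<in>schedules N T. real (age \<sigma> s i t))"
proof -
  let ?X = "schedules N T"
  let ?a = "\<lambda>s. real (age \<sigma> s i t)"
  have t0: "t \<in> {1..T}" using t by simp
  have G: "\<And>s x. ?a (s(t := x)) = ?a s"
    by (subst age_local[of t _ s]) auto
  have step: "(\<Sum>s\<in>?X. real (age \<sigma> s i (Suc t))) =
      (\<Sum>s\<in>?X. if s t = i \<and> \<sigma> i t = 1 then 1 else ?a s + 1)"
    using t by (intro sum.cong) auto
  show ?thesis
  proof (cases "\<sigma> i t = 1")
    case True
    have "(\<Sum>s\<in>?X. if s t = i \<and> \<sigma> i t = 1 then 1 else ?a s + 1) =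
        (\<Sum>s\<in>?X. (?a s + 1) - (if s t = i then ?a s else 0))"
      using True by (intro sum.cong) auto
    also have "\<dots> = (\<Sum>s\<in>?X. ?a s) + real (card ?X) - (\<Sum>s\<in>?X. if s t = i then ?a s else 0)"
      by (simp add: sum_subtractf sum.distrib)
    also have "(\<Sum>s\<in>?X. if s t = i then ?a s else 0) = (\<Sum>s\<in>?X. ?a s) / real N"
      using split_sum[OF i t0 G] N by (simp add: field_simps)
    finally show ?thesis using step True by (simp add: qq_def algebra_simps)
  next
    case False
    then show ?thesis using step by (simp add: sum.distrib)
  qed
qed


lemma qq_range: "N \<ge> 1 \<Longrightarrow> 0 \<le> qq N \<and> qq N \<le> 1"
  by (simp add: qq_def)

lemma sum_age_suf:
  assumes N: "N \<ge> 1" and i: "i < N" and t: "1 \<le> t" "t \<le> T"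
  shows "(\<Sum>s\<in>schedules N T. real (age \<sigma> s i t)) =
     real (card (schedules N T)) * sufL (map (wt (qq N)) (map (\<lambda>k. \<sigma> i k \<noteq> 1) [1..<t]))"
  using t
proof (induction t rule: dec_induct)
  case base
  then show ?case by simp
next
  case (step t)
  have tT: "t < T" using step.prems by simp
  have ih: "(\<Sum>s\<in>schedules N T. real (age \<sigma> s i t)) =
     real (card (schedules N T)) * sufL (map (wt (qq N)) (map (\<lambda>k. \<sigma> i k \<noteq> 1) [1..<t]))"
    using step.IH tT by simp
  have "(\<Sum>s\<in>schedules N T. real (age \<sigma> s i (Suc t))) =
     real (card (schedules N T)) + (if \<sigma> i t = 1 then qq N else 1) * (\<Sum>s\<in>schedules N T. real (age \<sigma> s i t))"
    using sum_age_rec[OF N i step.hyps(1) tT] .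
  also have "\<dots> = real (card (schedules N T)) * (1 + wt (qq N) (\<sigma> i t \<noteq> 1) *
        sufL (map (wt (qq N)) (map (\<lambda>k. \<sigma> i k \<noteq> 1) [1..<t])))"
  proof -
    have w: "wt (qq N) (\<sigma> i t \<noteq> 1) = (if \<sigma> i t = 1 then qq N else 1)" by (simp add: wt_def)
    show ?thesis unfolding w ih by (simp add: algebra_simps)
  qed
  also have "\<dots> = real (card (schedules N T)) * sufL (map (wt (qq N)) (map (\<lambda>k. \<sigma> i k \<noteq> 1) [1..<Suc t]))"
    using step.hyps(1) by (simp add: sufL_snoc)
  finally show ?case .
qed

lemma SL_sum: "1 \<le> T \<Longrightarrow> SL (map c [1..<T]) = (\<Sum>t=1..T. sufL (map c [1..<t]))"
proof (induction T rule: dec_induct)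
  case base
  then show ?case by simp
next
  case (step T)
  have "SL (map c [1..<Suc T]) = SL (map c [1..<T] @ [c T])" using step(1) by simp
  also have "\<dots> = SL (map c [1..<T]) + sufL (map c [1..<Suc T])"
    using step(1) by (simp add: SL_snoc)
  finally show ?case using step by simp
qed

lemma avg_formula:
  assumes N: "N \<ge> 1" and T: "T \<ge> 1"
  shows "avg_age N T \<sigma> = (1 / real T) * ((1 / real N) *
     (\<Sum>i<N. SL (map (wt (qq N)) (map (\<lambda>k. \<sigma> i k \<noteq> 1) [1..<T]))))"
proof -
  let ?X = "schedules N T"
  have ne: "?X \<noteq> {}" using sched_ne N by blast
  have cp: "real (card ?X) > 0" using ne sched_fin by (simp add: card_gt_0_iff)
  have E: "measure_pmf.expectation (uniform_sched N T) (\<lambda>s. real (age \<sigma> s i t)) =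
      sufL (map (wt (qq N)) (map (\<lambda>k. \<sigma> i k \<noteq> 1) [1..<t]))"
    if "i < N" "t \<in> {1..T}" for i t
    unfolding uniform_sched_def integral_pmf_of_set[OF ne sched_fin]
    using sum_age_suf[OF N that(1), of t T \<sigma>] that cp by simp
  have "avg_age N T \<sigma> = (1 / real T) * (\<Sum>t=1..T. (1 / real N) *
      (\<Sum>i<N. sufL (map (wt (qq N)) (map (\<lambda>k. \<sigma> i k \<noteq> 1) [1..<t]))))"
    unfolding avg_age_def using E by simp
  also have "\<dots> = (1 / real T) * ((1 / real N) *
      (\<Sum>i<N. \<Sum>t=1..T. sufL (map (wt (qq N)) (map (\<lambda>k. \<sigma> i k \<noteq> 1) [1..<t]))))"
    by (subst sum.swap) (simp add: sum_distrib_left)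
  also have "\<dots> = (1 / real T) * ((1 / real N) *
     (\<Sum>i<N. SL (map (wt (qq N)) (map (\<lambda>k. \<sigma> i k \<noteq> 1) [1..<T]))))"
    using SL_sum[OF T] by (simp only: map_map)
  finally show ?thesis .
qed

lemma nth_intv: "j < L \<Longrightarrow> p + k \<le> L \<Longrightarrow> intv L p k ! j = (p \<le> j \<and> j < p + k)"
  by (auto simp: intv_def nth_append)

lemma length_intv: "p + k \<le> L \<Longrightarrow> length (intv L p k) = L"
  by (simp add: intv_def)

lemma SL_mono_list:
  assumes q: "0 \<le> q" "q \<le> 1" and len: "length as = length bs"
    and le: "\<forall>j<length as. as ! j \<longrightarrow> bs ! j"
  shows "SL (map (wt q) as) \<le> SL (map (wt q) bs)"
proof -
  have "SL (map (wt q) (map ((!) as) [0..<length as])) \<le> SL (map (wt q) (map ((!) bs) [0..<length as]))"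
    using le by (intro SL_mono[OF q]) auto
  then show ?thesis using len by (metis map_nth)
qed

lemma count_card: "distinct ts \<Longrightarrow> count_list (map U ts) True = card {t \<in> set ts. U t}"
proof (induction ts)
  case (Cons a ts)
  have "{t \<in> set (a#ts). U t} = (if U a then insert a {t \<in> set ts. U t} else {t \<in> set ts. U t})"
    by auto
  then show ?case using Cons by auto
qed simp


lemma blocked_card:
  assumes f: "feasible N T \<alpha> \<sigma>'" and z: "\<alpha> * real T = real_of_int z"
  shows "card {t \<in> {1..<T}. \<exists>i<N. \<sigma>' i t \<noteq> 1} \<le> nat z"
proof -
  have v: "\<forall>i<N. \<forall>t\<in>{1..T}. \<sigma>' i t \<in> {0, 1}" and tot: "real (\<Sum>i<N. \<Sum>t=1..T. (1 - \<sigma>' i t)) \<le> \<alpha> * real T"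
    using f unfolding feasible_def by auto
  define B where "B i = {t \<in> {1..T}. \<sigma>' i t = 0}" for i
  have sub: "{t \<in> {1..<T}. \<exists>i<N. \<sigma>' i t \<noteq> 1} \<subseteq> (\<Union>i\<in>{..<N}. B i)"
    using v unfolding B_def by fastforce
  have "card {t \<in> {1..<T}. \<exists>i<N. \<sigma>' i t \<noteq> 1} \<le> card (\<Union>i\<in>{..<N}. B i)"
    by (rule card_mono[OF _ sub]) (auto simp: B_def)
  also have "\<dots> \<le> (\<Sum>i<N. card (B i))" by (rule card_UN_le) simp
  also have "\<dots> \<le> (\<Sum>i<N. \<Sum>t=1..T. (1 - \<sigma>' i t))"
  proof (rule sum_mono)
    fix i assume "i \<in> {..<N}"
    have "card (B i) = (\<Sum>t\<in>B i. (1 - \<sigma>' i t))" by (simp add: B_def)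
    also have "\<dots> \<le> (\<Sum>t=1..T. (1 - \<sigma>' i t))" by (rule sum_mono2) (auto simp: B_def)
    finally show "card (B i) \<le> (\<Sum>t=1..T. (1 - \<sigma>' i t))" .
  qed
  finally have c: "card {t \<in> {1..<T}. \<exists>i<N. \<sigma>' i t \<noteq> 1} \<le> (\<Sum>i<N. \<Sum>t=1..T. (1 - \<sigma>' i t))" .
  have "real (\<Sum>i<N. \<Sum>t=1..T. (1 - \<sigma>' i t)) \<le> real_of_int z" using tot z by simp
  hence "(\<Sum>i<N. \<Sum>t=1..T. (1 - \<sigma>' i t)) \<le> nat z" by linarith
  with c show ?thesis by linarith
qed

theorem theorem1:
  fixes N T :: nat and \<alpha> :: real
  assumes "N \<ge> 2" and "0 < \<alpha>" and "\<alpha> < 1" and "\<alpha> * real T \<in> \<int>"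
  shows "\<forall>u<N. \<exists>\<sigma>. feasible N T \<alpha> \<sigma> \<and>
           (\<forall>\<sigma>'. feasible N T \<alpha> \<sigma>' \<longrightarrow> avg_age N T \<sigma>' \<le> avg_age N T \<sigma>) \<and>
           (\<forall>i<N. \<forall>t\<in>{1..T}. \<sigma> i t = 0 \<longrightarrow> i = u) \<and>
           (\<exists>a b. {t\<in>{1..T}. \<sigma> u t = 0} = {a..<b})"
proof (intro allI impI)
  fix u assume u: "u < N"
  have N1: "N \<ge> 1" using assms(1) by simp
  show "\<exists>\<sigma>. feasible N T \<alpha> \<sigma> \<and>
           (\<forall>\<sigma>'. feasible N T \<alpha> \<sigma>' \<longrightarrow> avg_age N T \<sigma>' \<le> avg_age N T \<sigma>) \<and>
           (\<forall>i<N. \<forall>t\<in>{1..T}. \<sigma> i t = 0 \<longrightarrow> i = u) \<and>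
           (\<exists>a b. {t\<in>{1..T}. \<sigma> u t = 0} = {a..<b})"
  proof (cases "T = 0")
    case True
    show ?thesis
      by (rule exI[of _ "\<lambda>_ _. 1"]) (simp add: True feasible_def avg_age_def, meson less_irrefl)
  next
    case False
    hence T1: "T \<ge> 1" by simp
    obtain z where z: "\<alpha> * real T = real_of_int z" using assms(4) Ints_cases by metis
    define K where "K = nat z"
    define L where "L = T - 1"
    define ts where "ts = [1..<T]"
    have zpos: "0 \<le> z" using z assms(2) by (metis mult_nonneg_nonneg of_int_0_le_iff of_nat_0_le_iff less_imp_le)
    have "real_of_int z < real T" using z assms(3) T1 by (metis mult_strict_right_mono mult_1 of_nat_0_less_iff less_le_trans zero_less_one)
    hence KT: "K < T" unfolding K_def using zpos by linarith
    have KL: "K \<le> L" using KT unfolding L_def by simp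
    have realK: "real K = \<alpha> * real T" using z zpos unfolding K_def by simp
    have lts: "length ts = L" unfolding ts_def L_def by simp
    define q where "q = qq N"
    have q: "0 \<le> q" "q \<le> 1" using qq_range[OF N1] unfolding q_def by auto
    define f where "f p = SL (map (wt q) (intv L p K))" for p
    define I where "I = {p. p + K \<le> L}"
    have finI: "finite I" unfolding I_def by (rule finite_subset[of _ "{..L}"]) auto
    have "0 \<in> I" using KL unfolding I_def by simp
    hence neI: "I \<noteq> {}" by blast
    obtain p0 where p0I: "p0 \<in> I" and p0max: "\<And>p. p \<in> I \<Longrightarrow> f p \<le> f p0"
    proof -
      have "Max (f ` I) \<in> f ` I" using finI neI by simp
      then obtain p0 where "p0 \<in> I" "f p0 = Max (f ` I)" by auto
      moreover have "\<And>p. p \<in> I \<Longrightarrow> f p \<le> Max (f ` I)" using finI by simp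
      ultimately show ?thesis using that by metis
    qed
    have p0L: "p0 + K \<le> L" using p0I unfolding I_def by simp
    define J where "J = {p0+1..<p0+1+K}"
    define \<sigma>s where "\<sigma>s i t = (if i = u \<and> t \<in> J then 0 else (1::nat))" for i t
    define Obj where "Obj \<sigma> = (\<Sum>i<N. SL (map (wt q) (map (\<lambda>k. \<sigma> i k \<noteq> 1) ts)))" for \<sigma> :: "nat \<Rightarrow> nat \<Rightarrow> nat"
    define Z where "Z = SL (map (wt q) (map (\<lambda>_. False) ts))"
    have avg: "avg_age N T \<sigma> = (1 / real T) * ((1 / real N) * Obj \<sigma>)" for \<sigma>
      using avg_formula[OF N1 T1, of \<sigma>] unfolding Obj_def ts_def q_def .
    have JT: "J \<subseteq> {1..T}" using p0L unfolding J_def L_def by auto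
    have mapu: "map (\<lambda>k. \<sigma>s u k \<noteq> 1) ts = intv L p0 K"
    proof (rule nth_equalityI)
      show "length (map (\<lambda>k. \<sigma>s u k \<noteq> 1) ts) = length (intv L p0 K)"
        using lts length_intv[OF p0L] by simp
      fix j assume "j < length (map (\<lambda>k. \<sigma>s u k \<noteq> 1) ts)"
      hence j: "j < L" using lts by simp
      have "ts ! j = 1 + j" using j unfolding ts_def L_def by simp
      then show "map (\<lambda>k. \<sigma>s u k \<noteq> 1) ts ! j = intv L p0 K ! j"
        using j nth_intv[OF j p0L] lts unfolding \<sigma>s_def J_def by auto
    qed
    have mapo: "map (\<lambda>k. \<sigma>s i k \<noteq> 1) ts = map (\<lambda>_. False) ts" if "i \<noteq> u" for i
      using that unfolding \<sigma>s_def by simp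
    have Objs: "Obj \<sigma>s = f p0 + (real N - 1) * Z"
    proof -
      have "Obj \<sigma>s = SL (map (wt q) (map (\<lambda>k. \<sigma>s u k \<noteq> 1) ts)) +
          (\<Sum>i\<in>{..<N} - {u}. SL (map (wt q) (map (\<lambda>k. \<sigma>s i k \<noteq> 1) ts)))"
        unfolding Obj_def using u by (subst sum.remove[of _ u]) auto
      also have "(\<Sum>i\<in>{..<N} - {u}. SL (map (wt q) (map (\<lambda>k. \<sigma>s i k \<noteq> 1) ts))) = (\<Sum>i\<in>{..<N} - {u}. Z)"
        unfolding Z_def
      proof (rule sum.cong[OF refl])
        fix i assume "i \<in> {..<N} - {u}"
        hence "i \<noteq> u" by simp
        then show "SL (map (wt q) (map (\<lambda>k. \<sigma>s i k \<noteq> 1) ts)) = SL (map (wt q) (map (\<lambda>_. False) ts))"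
          by (metis mapo)
      qed
      also have "\<dots> = (real N - 1) * Z" using u N1 by (simp add: of_nat_diff)
      finally show ?thesis unfolding mapu f_def by simp
    qed
    show ?thesis
    proof (rule exI[of _ \<sigma>s], intro conjI)
      show "feasible N T \<alpha> \<sigma>s"
        unfolding feasible_def
      proof (intro conjI ballI allI impI)
        fix i t assume "i < N" "t \<in> {1..T}"
        then show "\<sigma>s i t \<in> {0, 1}" unfolding \<sigma>s_def by simp
      next
        have "(\<Sum>i<N. \<Sum>t=1..T. (1 - \<sigma>s i t)) = (\<Sum>i<N. if i = u then (\<Sum>t=1..T. if t \<in> J then 1 else 0) else 0)"
          unfolding \<sigma>s_def by (intro sum.cong refl) (auto intro: sum.cong)
        also have "\<dots> = (\<Sum>t=1..T. if t \<in> J then 1 else 0)" using u by simp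
        also have "\<dots> = card ({1..T} \<inter> J)" by (simp add: sum.inter_restrict[symmetric])
        also have "\<dots> = K" using JT unfolding J_def by (simp add: Int_absorb1)
        finally show "real (\<Sum>i<N. \<Sum>t=1..T. (1 - \<sigma>s i t)) \<le> \<alpha> * real T" using realK by simp
      next
        fix t assume "t \<in> {1..T}"
        have "(\<Sum>i<N. (1 - \<sigma>s i t)) = (\<Sum>i<N. if i = u then (if t \<in> J then 1 else 0) else 0)"
          unfolding \<sigma>s_def by (intro sum.cong) auto
        also have "\<dots> \<le> 1" using u by simp
        finally show "(\<Sum>i<N. (1 - \<sigma>s i t)) \<le> 1" .
      qed
    next
      show "\<forall>i<N. \<forall>t\<in>{1..T}. \<sigma>s i t = 0 \<longrightarrow> i = u" unfolding \<sigma>s_def by auto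
    next
      have "{t\<in>{1..T}. \<sigma>s u t = 0} = J" using JT unfolding \<sigma>s_def by auto
      then show "\<exists>a b. {t\<in>{1..T}. \<sigma>s u t = 0} = {a..<b}" unfolding J_def by blast
    next
      show "\<forall>\<sigma>'. feasible N T \<alpha> \<sigma>' \<longrightarrow> avg_age N T \<sigma>' \<le> avg_age N T \<sigma>s"
      proof (intro allI impI)
        fix \<sigma>' assume f': "feasible N T \<alpha> \<sigma>'"
        have v: "\<forall>i<N. \<forall>t\<in>{1..T}. \<sigma>' i t \<in> {0, 1}" and sl: "\<forall>t\<in>{1..T}. (\<Sum>i<N. (1 - \<sigma>' i t)) \<le> 1"
          using f' unfolding feasible_def by auto
        have disj: "\<forall>t\<in>set ts. \<forall>i j. i < N \<and> j < N \<and> \<sigma>' i t \<noteq> 1 \<and> \<sigma>' j t \<noteq> 1 \<longrightarrow> i = j"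
        proof (intro ballI allI impI)
          fix t i j assume t: "t \<in> set ts" and h: "i < N \<and> j < N \<and> \<sigma>' i t \<noteq> 1 \<and> \<sigma>' j t \<noteq> 1"
          have tT: "t \<in> {1..T}" using t unfolding ts_def by simp
          have a: "\<sigma>' i t \<in> {0,1}" "\<sigma>' j t \<in> {0,1}" using v h tT by blast+
          have z0: "\<sigma>' i t = 0" "\<sigma>' j t = 0" using a h by auto
          show "i = j"
          proof (rule ccontr)
            assume "i \<noteq> j"
            hence "(\<Sum>k\<in>{i,j}. (1 - \<sigma>' k t)) = 2" using z0 by simp
            moreover have "(\<Sum>k\<in>{i,j}. (1 - \<sigma>' k t)) \<le> (\<Sum>k<N. (1 - \<sigma>' k t))"
              using h by (intro sum_mono2) auto
            ultimately show False using sl tT by fastforce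
          qed
        qed
        define U where "U t = (\<exists>i<N. \<sigma>' i t \<noteq> 1)" for t
        have m1: "Obj \<sigma>' \<le> SL (map (wt q) (map U ts)) + (real N - 1) * Z"
          unfolding Obj_def Z_def U_def using SL_multi[OF q, of ts N "\<lambda>i k. \<sigma>' i k \<noteq> 1", OF disj] .
        define bs where "bs = map U ts"
        have cbs: "count_list bs True \<le> K"
        proof -
          have "count_list bs True = card {t \<in> set ts. U t}" unfolding bs_def
            by (rule count_card) (simp add: ts_def)
          also have "\<dots> = card {t \<in> {1..<T}. \<exists>i<N. \<sigma>' i t \<noteq> 1}" unfolding ts_def U_def by simp
          also have "\<dots> \<le> K" unfolding K_def by (rule blocked_card[OF f' z])
          finally show ?thesis .
        qed
        have lbs: "length bs = L" unfolding bs_def using lts by simp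
        obtain p where p: "p + count_list bs True \<le> L"
          and p2: "SL (map (wt q) bs) \<le> SL (map (wt q) (intv L p (count_list bs True)))"
          using interval_opt[OF q, of bs] lbs by auto
        define p' where "p' = (if p + K \<le> L then p else L - K)"
        have p'I: "p' + K \<le> L" unfolding p'_def using KL by auto
        have "SL (map (wt q) (intv L p (count_list bs True))) \<le> SL (map (wt q) (intv L p' K))"
        proof (rule SL_mono_list[OF q])
          show "length (intv L p (count_list bs True)) = length (intv L p' K)"
            using length_intv[OF p] length_intv[OF p'I] by simp
          show "\<forall>j<length (intv L p (count_list bs True)). intv L p (count_list bs True) ! j \<longrightarrow> intv L p' K ! j"
          proof (intro allI impI)
            fix j assume j: "j < length (intv L p (count_list bs True))"
              and a: "intv L p (count_list bs True) ! j"
            have jL: "j < L" using j length_intv[OF p] by simp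
            have "p \<le> j \<and> j < p + count_list bs True" using a nth_intv[OF jL p] by simp
            then have "p' \<le> j \<and> j < p' + K" using cbs jL unfolding p'_def by auto
            then show "intv L p' K ! j" using nth_intv[OF jL p'I] by simp
          qed
        qed
        also have "\<dots> \<le> f p0" using p0max[of p'] p'I unfolding f_def I_def by simp
        finally have "Obj \<sigma>' \<le> Obj \<sigma>s" using m1 p2 Objs unfolding bs_def by linarith
        then show "avg_age N T \<sigma>' \<le> avg_age N T \<sigma>s" unfolding avg
          by (intro mult_left_mono) auto
      qed
    qed
  qed
qed

end
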